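(* Consider the censored multi-armed bandit setting with $\mathcal A_t=[d]$ for all $t$, fix $\lambda>0$ and $\alpha\in(0,1]$, and let $\psi_\alpha(x)=\frac{x^{1-\alpha}}{1-\alpha}$ if $\alpha<1$ and $\psi_1(x)=\log x$. Let $\Pi_{\mathrm{off}}$ be the class of offline policies, i.e. those whose action sequence $(a_1,\dots,a_T)$ is chosen in advance, without observing any censorship indicators. Then, as $T\to\infty$, $$\max_{\pi\in\Pi_{\mathrm{off}}}\mathbb{E}[\mathbb V_\alpha(T,\pi)]\sim d_{\mathrm{eff}}\,\psi_\alpha\Big(\frac{T}{d_{\mathrm{eff}}}+\lambda\Big),$$ where $\mathbb V_\alpha(T,\pi)=\sum_{t=1}^T(N_{a_t}(t-1)+\lambda)^{-\alpha}$.
   Context: Censored multi-armed bandit setting: $d\ge1$ arms; at each round $t=1,\dots,T$ the agent picks $a_t\in[d]$ and a censorship indicator $x_{a_t}\sim\mathrm{Bernoulli}(p_{a_t})$ is drawn independently of everything else given $a_t$, with fixed $p_a\in(0,1]$. $N_a(t)=\#\{l\le t:a_l=a,\ x_{a_l}=1\}$ and $d_{\mathrm{eff}}=\sum_{a\in[d]}1/p_a$. *)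

theory Defs
  imports "HOL-Probability.Probability" "HOL-Library.Landau_Symbols"
begin

text \<open>Arms are 1..d; rounds are 1..T. An offline policy is an action sequence
  a : {1..T} -> {1..d} fixed in advance. Censorship indicators x l for l in {1..T}
  are independent Bernoulli(p (a l)).\<close>

definition psi :: "real \<Rightarrow> real \<Rightarrow> real" where
  "psi \<alpha> x = (if \<alpha> < 1 then x powr (1 - \<alpha>) / (1 - \<alpha>) else ln x)"

definition d_eff :: "nat \<Rightarrow> (nat \<Rightarrow> real) \<Rightarrow> real" where
  "d_eff d p = (\<Sum>a\<in>{1..d}. 1 / p a)"

definition cnt :: "(nat \<Rightarrow> nat) \<Rightarrow> (nat \<Rightarrow> bool) \<Rightarrow> nat \<Rightarrow> nat \<Rightarrow> nat" where
  "cnt a x b s = card {l \<in> {1..s}. a l = b \<and> x l}"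

definition V :: "real \<Rightarrow> real \<Rightarrow> nat \<Rightarrow> (nat \<Rightarrow> nat) \<Rightarrow> (nat \<Rightarrow> bool) \<Rightarrow> real" where
  "V \<alpha> lam T a x = (\<Sum>t=1..T. (real (cnt a x (a t) (t - 1)) + lam) powr (- \<alpha>))"

definition censor_pmf :: "(nat \<Rightarrow> real) \<Rightarrow> nat \<Rightarrow> (nat \<Rightarrow> nat) \<Rightarrow> (nat \<Rightarrow> bool) pmf" where
  "censor_pmf p T a = Pi_pmf {1..T} False (\<lambda>l. bernoulli_pmf (p (a l)))"

definition expected_V :: "(nat \<Rightarrow> real) \<Rightarrow> real \<Rightarrow> real \<Rightarrow> nat \<Rightarrow> (nat \<Rightarrow> nat) \<Rightarrow> real" where
  "expected_V p \<alpha> lam T a = measure_pmf.expectation (censor_pmf p T a) (V \<alpha> lam T a)"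

definition offline_policies :: "nat \<Rightarrow> nat \<Rightarrow> (nat \<Rightarrow> nat) set" where
  "offline_policies d T = ({1..T} \<rightarrow>\<^sub>E {1..d})"

definition max_offline :: "nat \<Rightarrow> (nat \<Rightarrow> real) \<Rightarrow> real \<Rightarrow> real \<Rightarrow> nat \<Rightarrow> real" where
  "max_offline d p \<alpha> lam T = Max (expected_V p \<alpha> lam T ` offline_policies d T)"

end

theory Submission
  imports Defs
begin

lemma concave_tangent:
  fixes f f' :: "real \<Rightarrow> real"
  assumes der: "\<And>z. z > 0 \<Longrightarrow> (f has_real_derivative f' z) (at z)"
    and anti: "\<And>u v. 0 < u \<Longrightarrow> u \<le> v \<Longrightarrow> f' v \<le> f' u"
    and x: "x > 0" and y: "y > 0"
  shows "f y - f x \<le> f' x * (y - x)"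
proof (cases x y rule: linorder_cases)
  case less
  obtain z where z: "x < z" "z < y" "f y - f x = (y - x) * f' z"
    using MVT2[OF less, of f f'] der x by force
  have "f' z \<le> f' x" using anti[of x z] z x by simp
  thus ?thesis using z less by (simp add: mult.commute mult_left_mono)
next
  case greater
  obtain z where z: "y < z" "z < x" "f x - f y = (x - y) * f' z"
    using MVT2[OF greater, of f f'] der y by force
  have "f' x \<le> f' z" using anti[of z x] z y by simp
  hence "(x - y) * f' x \<le> (x - y) * f' z" using greater by (simp add: mult_left_mono)
  thus ?thesis using z by (simp add: algebra_simps)
qed simp

lemma psi_deriv:
  assumes "0 < \<alpha>" "\<alpha> \<le> 1" "x > 0"
  shows "(psi \<alpha> has_real_derivative x powr -\<alpha>) (at x)"
proof (cases "\<alpha> < 1")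
  case True
  have e: "psi \<alpha> = (\<lambda>y. y powr (1 - \<alpha>) / (1 - \<alpha>))" using True by (auto simp: psi_def fun_eq_iff)
  have "((\<lambda>y. y powr (1 - \<alpha>) / (1 - \<alpha>)) has_real_derivative ((1 - \<alpha>) * x powr (1 - \<alpha> - 1)) / (1 - \<alpha>)) (at x)"
    by (intro DERIV_cdivide has_real_derivative_powr) (use assms in auto)
  thus ?thesis using True by (simp add: e)
next
  case False
  hence a: "\<alpha> = 1" using assms by simp
  have e: "psi \<alpha> = ln" using a by (auto simp: psi_def fun_eq_iff)
  have "(ln has_real_derivative 1 / x) (at x)" using assms by (auto intro!: derivative_eq_intros)
  thus ?thesis using assms unfolding e by (simp add: a powr_minus_divide)
qed

lemma psi_tangent:
  assumes "0 < \<alpha>" "\<alpha> \<le> 1" "x > 0" "y > 0"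
  shows "psi \<alpha> y - psi \<alpha> x \<le> x powr -\<alpha> * (y - x)"
  by (rule concave_tangent[where f' = "\<lambda>z. z powr -\<alpha>"])
     (use assms in \<open>auto intro: psi_deriv powr_mono2'\<close>)

lemma psi_mono:
  assumes "0 < \<alpha>" "\<alpha> \<le> 1" "x > 0" "x \<le> y"
  shows "psi \<alpha> x \<le> psi \<alpha> y"
proof -
  have "psi \<alpha> x - psi \<alpha> y \<le> y powr -\<alpha> * (x - y)" using psi_tangent[of \<alpha> y x] assms by simp
  also have "\<dots> \<le> 0" using assms by (simp add: mult_nonneg_nonpos)
  finally show ?thesis by simp
qed

lemma rpow_tangent:
  fixes \<alpha> z w :: real
  assumes "0 < \<alpha>" "z > 0" "w > 0"
  shows "z powr -\<alpha> \<ge> w powr -\<alpha> - \<alpha> * w powr (-\<alpha> - 1) * (z - w)"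
proof -
  have "(\<lambda>x. - (x powr -\<alpha>)) z - (\<lambda>x. - (x powr -\<alpha>)) w \<le> (\<alpha> * w powr (-\<alpha> - 1)) * (z - w)"
  proof (rule concave_tangent[where f' = "\<lambda>x. \<alpha> * x powr (-\<alpha> - 1)"])
    fix x :: real assume "x > 0"
    thus "((\<lambda>x. - (x powr -\<alpha>)) has_real_derivative \<alpha> * x powr (-\<alpha> - 1)) (at x)"
      by (auto intro!: derivative_eq_intros)
  next
    fix u v :: real assume "0 < u" "u \<le> v"
    thus "\<alpha> * v powr (-\<alpha> - 1) \<le> \<alpha> * u powr (-\<alpha> - 1)"
      using assms by (intro mult_left_mono powr_mono2') auto
  qed (use assms in auto)
  thus ?thesis by (simp add: algebra_simps)
qed



lemma pos_aff: "q > 0 \<Longrightarrow> lam > 0 \<Longrightarrow> 0 < q * real (n::nat) + (lam::real)"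
  by (simp add: add_nonneg_pos)

lemma sum_lower:
  assumes "0 < \<alpha>" "\<alpha> \<le> 1" "q > 0" "lam > 0"
  shows "(psi \<alpha> (q * real n + lam) - psi \<alpha> lam) / q \<le> (\<Sum>k<n. (q * real k + lam) powr -\<alpha>)"
proof (induction n)
  case 0 thus ?case by simp
next
  case (Suc n)
  have "psi \<alpha> (q * real n + lam + q) - psi \<alpha> (q * real n + lam) \<le> (q * real n + lam) powr -\<alpha> * q"
    using psi_tangent[of \<alpha> "q * real n + lam" "q * real n + lam + q"] assms pos_aff[of q lam n] by simp
  hence "(psi \<alpha> (q * real (Suc n) + lam) - psi \<alpha> lam) / q \<le> (psi \<alpha> (q * real n + lam) - psi \<alpha> lam) / q + (q * real n + lam) powr -\<alpha>"
    using assms by (simp add: field_simps distrib_left)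
  thus ?case using Suc by simp
qed

lemma sum_upper_Suc:
  assumes "0 < \<alpha>" "\<alpha> \<le> 1" "q > 0" "lam > 0"
  shows "(\<Sum>k<Suc n. (q * real k + lam) powr -\<alpha>) \<le> lam powr -\<alpha> + (psi \<alpha> (q * real n + lam) - psi \<alpha> lam) / q"
proof (induction n)
  case 0 thus ?case by simp
next
  case (Suc n)
  have "psi \<alpha> (q * real n + lam) - psi \<alpha> (q * real n + lam + q) \<le> (q * real n + lam + q) powr -\<alpha> * (- q)"
    using psi_tangent[of \<alpha> "q * real n + lam + q" "q * real n + lam"] assms pos_aff[of q lam n] by simp
  hence "(q * real (Suc n) + lam) powr -\<alpha> \<le> (psi \<alpha> (q * real (Suc n) + lam) - psi \<alpha> lam) / q - (psi \<alpha> (q * real n + lam) - psi \<alpha> lam) / q"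
    using assms by (simp add: field_simps distrib_left)
  thus ?case using Suc by simp
qed

lemma sum_upper:
  assumes "0 < \<alpha>" "\<alpha> \<le> 1" "q > 0" "lam > 0"
  shows "(\<Sum>k<n. (q * real k + lam) powr -\<alpha>) \<le> lam powr -\<alpha> + (psi \<alpha> (q * real n + lam) - psi \<alpha> lam) / q"
proof (cases n)
  case 0 thus ?thesis by simp
next
  case (Suc m)
  have "psi \<alpha> (q * real m + lam) \<le> psi \<alpha> (q * real n + lam)"
    using assms Suc pos_aff[of q lam m] by (intro psi_mono) auto
  hence "(psi \<alpha> (q * real m + lam) - psi \<alpha> lam) / q \<le> (psi \<alpha> (q * real n + lam) - psi \<alpha> lam) / q"
    using assms by (simp add: divide_right_mono)
  thus ?thesis using sum_upper_Suc[OF assms, of m] Suc by simp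
qed

lemma regroup:
  fixes a :: "nat \<Rightarrow> nat" and f :: "nat \<Rightarrow> nat \<Rightarrow> real"
  assumes "a ` {1..T} \<subseteq> B" "finite B"
  shows "(\<Sum>t=1..T. f (a t) (card {l\<in>{1..t-1}. a l = a t}))
       = (\<Sum>b\<in>B. \<Sum>k < card {l\<in>{1..T}. a l = b}. f b k)"
  using assms(1)
proof (induction T)
  case 0 thus ?case by simp
next
  case (Suc T)
  define c where "c = a (Suc T)"
  have cB: "c \<in> B" using Suc.prems by (auto simp: c_def)
  have IH: "(\<Sum>t=1..T. f (a t) (card {l\<in>{1..t-1}. a l = a t})) = (\<Sum>b\<in>B. \<Sum>k < card {l\<in>{1..T}. a l = b}. f b k)"
  proof -
    have sub: "a ` {1..T} \<subseteq> B" using Suc.prems by auto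
    show ?thesis by (rule Suc.IH[OF sub])
  qed
  have cardS: "card {l\<in>{1..Suc T}. a l = b} = card {l\<in>{1..T}. a l = b} + (if b = c then 1 else 0)" for b
  proof -
    have "{l\<in>{1..Suc T}. a l = b} = (if b = c then insert (Suc T) {l\<in>{1..T}. a l = b} else {l\<in>{1..T}. a l = b})"
      by (auto simp: c_def le_Suc_eq)
    thus ?thesis by simp
  qed
  have inner: "(\<Sum>k < card {l\<in>{1..Suc T}. a l = b}. f b k) = (\<Sum>k < card {l\<in>{1..T}. a l = b}. f b k)
        + (if b = c then f b (card {l\<in>{1..T}. a l = b}) else 0)" for b
    unfolding cardS by simp
  have "(\<Sum>b\<in>B. \<Sum>k < card {l\<in>{1..Suc T}. a l = b}. f b k) = (\<Sum>b\<in>B. \<Sum>k < card {l\<in>{1..T}. a l = b}. f b k)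
        + (\<Sum>b\<in>B. if b = c then f b (card {l\<in>{1..T}. a l = b}) else 0)"
    unfolding inner by (simp only: sum.distrib)
  also have "(\<Sum>b\<in>B. if b = c then f b (card {l\<in>{1..T}. a l = b}) else 0) = f c (card {l\<in>{1..T}. a l = c})"
    using cB assms(2) by (simp add: sum.delta')
  finally show ?case using IH by (simp add: c_def)
qed



lemma fin_censor: "finite (set_pmf (censor_pmf p T a))"
proof -
  have "set_pmf (censor_pmf p T a) \<subseteq> PiE_dflt {1..T} False (set_pmf \<circ> (\<lambda>l. bernoulli_pmf (p (a l))))"
    unfolding censor_pmf_def by (rule set_Pi_pmf_subset') simp
  moreover have "finite (PiE_dflt {1..T} False (set_pmf \<circ> (\<lambda>l. bernoulli_pmf (p (a l)))))"
    by (intro finite_PiE_dflt) auto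
  ultimately show ?thesis by (rule finite_subset)
qed

lemma int_censor: "integrable (measure_pmf (censor_pmf p T a)) (f :: _ \<Rightarrow> real)"
  by (rule integrable_measure_pmf_finite[OF fin_censor])

lemma E_ind:
  assumes "l \<in> {1..T}" "0 \<le> p (a l)" "p (a l) \<le> 1"
  shows "measure_pmf.expectation (censor_pmf p T a) (\<lambda>x. of_bool (x l) :: real) = p (a l)"
proof -
  have "measure_pmf.expectation (censor_pmf p T a) (\<lambda>x. of_bool (x l) :: real)
      = measure_pmf.expectation (map_pmf (\<lambda>f. f l) (censor_pmf p T a)) (\<lambda>v. of_bool v :: real)"
    by simp
  also have "map_pmf (\<lambda>f. f l) (censor_pmf p T a) = bernoulli_pmf (p (a l))"
    unfolding censor_pmf_def using assms by (subst Pi_pmf_component) auto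
  finally show ?thesis using assms by simp
qed

lemma E_cnt:
  assumes "S \<subseteq> {1..T}" "\<And>l. l \<in> S \<Longrightarrow> 0 \<le> p (a l) \<and> p (a l) \<le> 1"
  shows "measure_pmf.expectation (censor_pmf p T a) (\<lambda>x. real (card {l\<in>S. x l})) = (\<Sum>l\<in>S. p (a l))"
proof -
  have fS: "finite S" using assms(1) finite_subset by blast
  have "(\<lambda>x. real (card {l\<in>S. x l})) = (\<lambda>x. \<Sum>l\<in>S. of_bool (x l))"
    using fS by (auto simp: fun_eq_iff Int_def)
  hence "measure_pmf.expectation (censor_pmf p T a) (\<lambda>x. real (card {l\<in>S. x l}))
      = (\<Sum>l\<in>S. measure_pmf.expectation (censor_pmf p T a) (\<lambda>x. of_bool (x l)))"
    by (simp add: Bochner_Integration.integral_sum int_censor)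
  also have "\<dots> = (\<Sum>l\<in>S. p (a l))"
    using assms by (intro sum.cong refl E_ind) auto
  finally show ?thesis .
qed

lemma E_pow:
  assumes "S \<subseteq> {1..T}" "\<And>l. l \<in> S \<Longrightarrow> 0 \<le> p (a l) \<and> p (a l) \<le> 1" "0 \<le> u"
  shows "measure_pmf.expectation (censor_pmf p T a) (\<lambda>x. u ^ card {l\<in>S. x l})
         = (\<Prod>l\<in>S. 1 - p (a l) + p (a l) * u)"
proof -
  have fS: "finite S" using assms(1) finite_subset by blast
  have "(\<lambda>x. u ^ card {l\<in>S. x l}) = (\<lambda>x. \<Prod>l\<in>{1..T}. (\<lambda>l v. if l \<in> S \<and> v then u else 1) l (x l))"
  proof
    fix x :: "nat \<Rightarrow> bool"
    have "(\<Prod>l\<in>{1..T}. (\<lambda>l v. if l \<in> S \<and> v then u else 1) l (x l)) = (\<Prod>l\<in>{l\<in>{1..T}. l \<in> S \<and> x l}. u)"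
      by (rule prod.inter_filter[symmetric]) simp
    also have "{l\<in>{1..T}. l \<in> S \<and> x l} = {l\<in>S. x l}" using assms(1) by auto
    finally show "u ^ card {l\<in>S. x l} = (\<Prod>l\<in>{1..T}. (\<lambda>l v. if l \<in> S \<and> v then u else 1) l (x l))"
      by simp
  qed
  hence "measure_pmf.expectation (censor_pmf p T a) (\<lambda>x. u ^ card {l\<in>S. x l})
     = (\<Prod>l\<in>{1..T}. measure_pmf.expectation (bernoulli_pmf (p (a l))) (\<lambda>v. if l \<in> S \<and> v then u else 1))"
    unfolding censor_pmf_def
    by (simp only:) (rule expectation_prod_Pi_pmf, auto intro: integrable_measure_pmf_finite simp: assms(3))
  also have "\<dots> = (\<Prod>l\<in>{1..T}. if l \<in> S then 1 - p (a l) + p (a l) * u else 1)"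
    using assms(1,2) by (intro prod.cong refl) auto
  also have "\<dots> = (\<Prod>l\<in>{l\<in>{1..T}. l \<in> S}. 1 - p (a l) + p (a l) * u)"
    by (rule prod.inter_filter[symmetric]) simp
  also have "{l\<in>{1..T}. l \<in> S} = S" using assms(1) by auto
  finally show ?thesis .
qed



lemma pointwise_upper:
  fixes \<alpha> c \<theta> lam :: real
  assumes "0 < \<alpha>" "0 \<le> c" "0 < \<theta>" "\<theta> \<le> 1" "lam > 0"
  shows "(real n + lam) powr -\<alpha> \<le> (c + lam) powr -\<alpha> + lam powr -\<alpha> * (\<theta> powr (-c) * \<theta> ^ n)"
proof (cases "c \<le> real n")
  case True
  have "(real n + lam) powr -\<alpha> \<le> (c + lam) powr -\<alpha>"
    using assms True by (intro powr_mono2') auto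
  moreover have "0 \<le> lam powr -\<alpha> * (\<theta> powr (-c) * \<theta> ^ n)" using assms by simp
  ultimately show ?thesis by linarith
next
  case False
  have "\<theta> powr (-c) * \<theta> ^ n = exp ((real n - c) * ln \<theta>)"
    using assms by (simp add: powr_def exp_diff exp_minus field_simps powr_realpow[symmetric] algebra_simps exp_add[symmetric])
  also have "\<dots> \<ge> 1" using False assms by (simp add: mult_nonpos_nonpos)
  finally have g1: "\<theta> powr (-c) * \<theta> ^ n \<ge> 1" .
  have "(real n + lam) powr -\<alpha> \<le> lam powr -\<alpha>"
    using assms by (intro powr_mono2') auto
  also have "\<dots> \<le> lam powr -\<alpha> * (\<theta> powr (-c) * \<theta> ^ n)"
    using g1 assms by simp
  also have "\<dots> \<le> (c + lam) powr -\<alpha> + lam powr -\<alpha> * (\<theta> powr (-c) * \<theta> ^ n)" by simp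
  finally show ?thesis .
qed

lemma cnt_eq: "cnt a x b s = card {l \<in> {l\<in>{1..s}. a l = b}. x l}"
  unfolding cnt_def by (rule arg_cong[where f = card]) auto

lemma term_lower:
  fixes \<alpha> lam :: real
  assumes "0 < \<alpha>" "lam > 0" "t \<in> {1..T}"
    and hp: "\<And>l. l \<in> {1..T} \<Longrightarrow> 0 < p (a l) \<and> p (a l) \<le> 1"
  shows "(real (card {l\<in>{1..t-1}. a l = a t}) * p (a t) + lam) powr -\<alpha>
      \<le> measure_pmf.expectation (censor_pmf p T a) (\<lambda>x. (real (cnt a x (a t) (t - 1)) + lam) powr -\<alpha>)"
proof -
  define S where "S = {l\<in>{1..t-1}. a l = a t}"
  define w where "w = real (card S) * p (a t) + lam"
  define P where "P = censor_pmf p T a"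
  have SS: "S \<subseteq> {1..T}" using assms(3) by (auto simp: S_def)
  have hpS: "\<And>l. l \<in> S \<Longrightarrow> 0 \<le> p (a l) \<and> p (a l) \<le> 1" using hp SS by fastforce
  have pt: "0 < p (a t)" using hp[OF assms(3)] by auto
  have "0 \<le> real (card S) * p (a t)" using pt by simp
  hence wpos: "w > 0" unfolding w_def using assms(2) by linarith
  have EX: "measure_pmf.expectation P (\<lambda>x. real (card {l\<in>S. x l})) = real (card S) * p (a t)"
    unfolding P_def using E_cnt[of S T p a, OF SS hpS] by (simp add: S_def)
  have "measure_pmf.expectation P (\<lambda>x. w powr -\<alpha> - \<alpha> * w powr (-\<alpha> - 1) * ((real (card {l\<in>S. x l}) + lam) - w))
      = w powr -\<alpha> - \<alpha> * w powr (-\<alpha> - 1) * (measure_pmf.expectation P (\<lambda>x. real (card {l\<in>S. x l})) + lam - w)"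
    unfolding P_def by (simp add: int_censor Bochner_Integration.integral_diff Bochner_Integration.integral_add)
  also have "\<dots> = w powr -\<alpha>" using EX by (simp add: w_def)
  finally have e: "measure_pmf.expectation P (\<lambda>x. w powr -\<alpha> - \<alpha> * w powr (-\<alpha> - 1) * ((real (card {l\<in>S. x l}) + lam) - w)) = w powr -\<alpha>" .
  have "measure_pmf.expectation P (\<lambda>x. w powr -\<alpha> - \<alpha> * w powr (-\<alpha> - 1) * ((real (card {l\<in>S. x l}) + lam) - w))
      \<le> measure_pmf.expectation P (\<lambda>x. (real (card {l\<in>S. x l}) + lam) powr -\<alpha>)"
    unfolding P_def
    by (intro integral_mono int_censor rpow_tangent) (use assms wpos in \<open>auto simp: add_nonneg_pos\<close>)
  hence "w powr -\<alpha> \<le> measure_pmf.expectation P (\<lambda>x. (real (card {l\<in>S. x l}) + lam) powr -\<alpha>)"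
    using e by simp
  thus ?thesis by (simp add: S_def w_def P_def cnt_eq)
qed

definition rr :: "real \<Rightarrow> real \<Rightarrow> real" where
  "rr \<theta> q = \<theta> powr (-\<theta> * q) * (1 - q + q * \<theta>)"

lemma term_upper:
  fixes \<alpha> lam \<theta> :: real
  assumes "0 < \<alpha>" "lam > 0" "t \<in> {1..T}" "0 < \<theta>" "\<theta> \<le> 1"
    and hp: "\<And>l. l \<in> {1..T} \<Longrightarrow> 0 < p (a l) \<and> p (a l) \<le> 1"
  shows "measure_pmf.expectation (censor_pmf p T a) (\<lambda>x. (real (cnt a x (a t) (t - 1)) + lam) powr -\<alpha>)
     \<le> (\<theta> * p (a t) * real (card {l\<in>{1..t-1}. a l = a t}) + lam) powr -\<alpha>
        + lam powr -\<alpha> * rr \<theta> (p (a t)) ^ card {l\<in>{1..t-1}. a l = a t}"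
proof -
  define S where "S = {l\<in>{1..t-1}. a l = a t}"
  define m where "m = card S"
  define c where "c = \<theta> * p (a t) * real m"
  define P where "P = censor_pmf p T a"
  have SS: "S \<subseteq> {1..T}" using assms(3) by (auto simp: S_def)
  have hpS: "\<And>l. l \<in> S \<Longrightarrow> 0 \<le> p (a l) \<and> p (a l) \<le> 1" using hp SS by fastforce
  have pt: "0 < p (a t)" "p (a t) \<le> 1" using hp[OF assms(3)] by auto
  have c0: "0 \<le> c" unfolding c_def using assms(4) pt(1) by simp
  have EP: "measure_pmf.expectation P (\<lambda>x. \<theta> ^ card {l\<in>S. x l}) = (1 - p (a t) + p (a t) * \<theta>) ^ m"
    unfolding P_def using E_pow[of S T p a \<theta>, OF SS hpS] assms by (simp add: S_def m_def)
  have "measure_pmf.expectation P (\<lambda>x. (real (card {l\<in>S. x l}) + lam) powr -\<alpha>)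
      \<le> measure_pmf.expectation P (\<lambda>x. (c + lam) powr -\<alpha> + lam powr -\<alpha> * (\<theta> powr (-c) * \<theta> ^ card {l\<in>S. x l}))"
    unfolding P_def
    by (intro integral_mono int_censor pointwise_upper) (use assms c0 in auto)
  also have "\<dots> = (c + lam) powr -\<alpha> + lam powr -\<alpha> * (\<theta> powr (-c) * (1 - p (a t) + p (a t) * \<theta>) ^ m)"
    using EP unfolding P_def by (simp add: int_censor)
  also have "\<theta> powr (-c) = (\<theta> powr (-\<theta> * p (a t))) powr real m"
    by (simp add: c_def powr_powr)
  also have "\<dots> = (\<theta> powr (-\<theta> * p (a t))) ^ m"
    by (rule powr_realpow) (use assms(4) in simp)
  finally show ?thesis
    by (simp add: S_def m_def c_def P_def cnt_eq rr_def power_mult_distrib)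
qed



lemma psi_at_top:
  assumes "0 < \<alpha>" "\<alpha> \<le> 1"
  shows "filterlim (psi \<alpha>) at_top at_top"
proof (cases "\<alpha> < 1")
  case True
  have ex: "filterlim (\<lambda>x. exp ((1 - \<alpha>) * ln x)) at_top at_top"
    by (rule filterlim_compose[OF exp_at_top])
       (rule filterlim_tendsto_pos_mult_at_top[OF tendsto_const _ ln_at_top], use True in simp)
  have "filterlim (\<lambda>x. exp ((1 - \<alpha>) * ln x) * (1 / (1 - \<alpha>))) at_top at_top"
    by (rule filterlim_at_top_mult_tendsto_pos[OF tendsto_const _ ex]) (use True in simp)
  hence h: "filterlim (\<lambda>x. exp ((1 - \<alpha>) * ln x) / (1 - \<alpha>)) at_top at_top" by simp
  have e: "eventually (\<lambda>x. exp ((1 - \<alpha>) * ln x) / (1 - \<alpha>) = psi \<alpha> x) at_top"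
    using eventually_gt_at_top[of 0] by eventually_elim (use True in \<open>simp add: psi_def powr_def\<close>)
  show ?thesis by (rule filterlim_mono_eventually[OF h order.refl order.refl e])
next
  case False
  hence "psi \<alpha> = ln" using assms by (auto simp: psi_def fun_eq_iff)
  thus ?thesis by (simp add: ln_at_top)
qed

lemma rr_pos:
  assumes "0 < \<theta>" "\<theta> \<le> 1" "0 < q" "q \<le> 1"
  shows "0 < rr \<theta> q"
proof -
  have "0 < 1 - q + q * \<theta>" using assms by (smt (verit) mult_pos_pos)
  thus ?thesis using assms by (simp add: rr_def)
qed

lemma ln_strict: fixes \<theta> :: real assumes "0 < \<theta>" "\<theta> < 1" shows "- ln \<theta> < 1 / \<theta> - 1"
proof -
  define s where "s = sqrt (1 / \<theta>)"
  have s1: "s > 1" using assms by (simp add: s_def)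
  have ss: "s * s = 1 / \<theta>" using assms by (simp add: s_def)
  have "- ln \<theta> = ln (1 / \<theta>)" using assms by (simp add: ln_div)
  also have "\<dots> = ln (s * s)" using ss by simp
  also have "\<dots> = 2 * ln s" using s1 by (simp add: ln_mult)
  also have "\<dots> \<le> 2 * (s - 1)" using ln_le_minus_one[of s] s1 by simp
  also have "\<dots> < s * s - 1"
  proof -
    have "0 < (s - 1) * (s - 1)" using s1 by simp
    thus ?thesis by (simp add: algebra_simps)
  qed
  finally show ?thesis using ss by simp
qed

lemma rr_less_1:
  assumes "0 < \<theta>" "\<theta> < 1" "0 < q" "q \<le> 1"
  shows "rr \<theta> q < 1"
proof -
  have "1 - q + q * \<theta> \<le> exp (- q * (1 - \<theta>))"
    using exp_ge_add_one_self[of "- q * (1 - \<theta>)"] by (simp add: algebra_simps)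
  also have "\<dots> < exp (\<theta> * q * ln \<theta>)"
  proof -
    have "- ln \<theta> * \<theta> < (1 / \<theta> - 1) * \<theta>" using ln_strict[OF assms(1,2)] assms(1)
      by (intro mult_strict_right_mono) auto
    moreover have "(1 / \<theta> - 1) * \<theta> = 1 - \<theta>" using assms by (simp add: field_simps)
    ultimately have "- (1 - \<theta>) < \<theta> * ln \<theta>" by (simp add: algebra_simps)
    hence "q * (- (1 - \<theta>)) < q * (\<theta> * ln \<theta>)" using assms by (intro mult_strict_left_mono) auto
    thus ?thesis by (simp add: algebra_simps)
  qed
  also have "\<dots> = \<theta> powr (\<theta> * q)" using assms by (simp add: powr_def algebra_simps)
  finally have "1 - q + q * \<theta> < \<theta> powr (\<theta> * q)" .
  hence "\<theta> powr (-\<theta> * q) * (1 - q + q * \<theta>) < \<theta> powr (-\<theta> * q) * \<theta> powr (\<theta> * q)"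
    using assms by (intro mult_strict_left_mono) auto
  also have "\<dots> = 1" using assms by (simp add: powr_add[symmetric])
  finally show ?thesis by (simp add: rr_def)
qed

lemma geom_bound:
  fixes r :: real assumes "0 \<le> r" "r < 1"
  shows "(\<Sum>k<n. r ^ k) \<le> 1 / (1 - r)"
proof -
  have "(\<Sum>k<n. r ^ k) = (1 - r ^ n) / (1 - r)" using assms by (simp add: sum_gp_strict)
  also have "\<dots> \<le> 1 / (1 - r)" using assms by (intro divide_right_mono) auto
  finally show ?thesis .
qed



lemma card_upd:
  fixes a :: "nat \<Rightarrow> nat"
  shows "card {l\<in>{1..Suc T}. (a(Suc T := c)) l = b} = card {l\<in>{1..T}. a l = b} + (if b = c then 1 else 0)"
proof -
  have "{l\<in>{1..Suc T}. (a(Suc T := c)) l = b} = (if b = c then insert (Suc T) {l\<in>{1..T}. a l = b} else {l\<in>{1..T}. a l = b})"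
    by (auto simp: le_Suc_eq)
  thus ?thesis by simp
qed

lemma upd_policy:
  assumes "a \<in> offline_policies d T" "c \<in> {1..d}"
  shows "a(Suc T := c) \<in> offline_policies d (Suc T)"
  using assms by (auto simp: offline_policies_def PiE_iff extensional_def le_Suc_eq)

lemma exists_policy:
  fixes N :: "nat \<Rightarrow> nat"
  assumes "d \<ge> 1" "(\<Sum>b\<in>{1..d}. N b) \<le> T"
  shows "\<exists>a\<in>offline_policies d T. \<forall>b\<in>{1..d}. N b \<le> card {l\<in>{1..T}. a l = b}"
  using assms(2)
proof (induction T arbitrary: N)
  case 0
  hence "\<forall>b\<in>{1..d}. N b = 0" by simp
  thus ?case by (intro bexI[of _ "\<lambda>_. undefined"]) (auto simp: offline_policies_def)
next
  case (Suc T)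
  show ?case
  proof (cases "\<exists>b\<in>{1..d}. N b > 0")
    case True
    then obtain b0 where b0: "b0 \<in> {1..d}" "N b0 > 0" by blast
    define N' where "N' = N(b0 := N b0 - 1)"
    have "(\<Sum>b\<in>{1..d}. N b) = N b0 + (\<Sum>b\<in>{1..d} - {b0}. N b)"
      using b0 by (simp add: sum.remove)
    moreover have "(\<Sum>b\<in>{1..d}. N' b) = N' b0 + (\<Sum>b\<in>{1..d} - {b0}. N' b)"
      using b0 by (simp add: sum.remove)
    moreover have "(\<Sum>b\<in>{1..d} - {b0}. N' b) = (\<Sum>b\<in>{1..d} - {b0}. N b)"
      by (intro sum.cong) (auto simp: N'_def)
    ultimately have "(\<Sum>b\<in>{1..d}. N' b) \<le> T" using Suc.prems b0 by (simp add: N'_def)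
    from Suc.IH[OF this] obtain a where a: "a \<in> offline_policies d T"
      "\<forall>b\<in>{1..d}. N' b \<le> card {l\<in>{1..T}. a l = b}" by blast
    show ?thesis
    proof (intro bexI[of _ "a(Suc T := b0)"] ballI)
      fix b assume "b \<in> {1..d}"
      thus "N b \<le> card {l\<in>{1..Suc T}. (a(Suc T := b0)) l = b}"
        using a(2) unfolding card_upd by (auto simp: N'_def split: if_splits)
    qed (rule upd_policy[OF a(1) b0(1)])
  next
    case False
    have "(\<Sum>b\<in>{1..d}. (0::nat)) \<le> T" by simp
    from Suc.IH[OF this] obtain a where a: "a \<in> offline_policies d T" by blast
    show ?thesis
      by (intro bexI[of _ "a(Suc T := 1)"] ballI upd_policy[OF a]) (use False assms(1) in auto)
  qed
qed

lemma EV_sum: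
  "expected_V p \<alpha> lam T a = (\<Sum>t=1..T. measure_pmf.expectation (censor_pmf p T a)
      (\<lambda>x. (real (cnt a x (a t) (t - 1)) + lam) powr -\<alpha>))"
  unfolding expected_V_def V_def by (simp add: Bochner_Integration.integral_sum int_censor)



definition Kup :: "nat \<Rightarrow> (nat \<Rightarrow> real) \<Rightarrow> real \<Rightarrow> real \<Rightarrow> real \<Rightarrow> real" where
  "Kup d p \<alpha> lam \<theta> = (\<Sum>b\<in>{1..d}. lam powr -\<alpha> - psi \<alpha> lam / (\<theta> * p b) + lam powr -\<alpha> / (1 - rr \<theta> (p b)))"

lemma alg_help:
  fixes q A B n l x :: real
  assumes "q \<noteq> 0"
  shows "(A + B * (q * n + l - x)) / q = A * (1 / q) + B * (n + l * (1 / q) - x * (1 / q))"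
  using assms by (simp add: field_simps)

lemma policy_props:
  assumes "a \<in> offline_policies d T" "l \<in> {1..T}"
  shows "a l \<in> {1..d}"
  using assms by (auto simp: offline_policies_def)

lemma sum_counts:
  assumes "a \<in> offline_policies d T"
  shows "(\<Sum>b\<in>{1..d}. real (card {l\<in>{1..T}. a l = b})) = real T"
proof -
  have "(\<Sum>t=1..T. (\<lambda>b k. 1::real) (a t) (card {l\<in>{1..t-1}. a l = a t}))
      = (\<Sum>b\<in>{1..d}. \<Sum>k < card {l\<in>{1..T}. a l = b}. (\<lambda>b k. 1::real) b k)"
    by (rule regroup) (use assms policy_props in auto)
  thus ?thesis by simp
qed

lemma upper_all:
  assumes d: "d \<ge> 1" and hp: "\<And>b. b \<in> {1..d} \<Longrightarrow> 0 < p b \<and> p b \<le> 1"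
    and lam: "lam > 0" and al: "0 < \<alpha>" "\<alpha> \<le> 1" and th: "0 < \<theta>" "\<theta> < 1"
    and a: "a \<in> offline_policies d T"
  shows "expected_V p \<alpha> lam T a \<le> d_eff d p / \<theta> * psi \<alpha> (real T / d_eff d p + lam) + Kup d p \<alpha> lam \<theta>"
proof -
  define n where "n b = card {l\<in>{1..T}. a l = b}" for b
  define f where "f b k = (\<theta> * p b * real k + lam) powr -\<alpha> + lam powr -\<alpha> * rr \<theta> (p b) ^ k" for b k
  define D0 where "D0 = d_eff d p"
  define S1 where "S1 = (\<Sum>b\<in>{1..d}. 1 / (\<theta> * p b))"
  define x0 where "x0 = \<theta> * real T / D0 + lam"
  have hpa: "\<And>l. l \<in> {1..T} \<Longrightarrow> 0 < p (a l) \<and> p (a l) \<le> 1" using hp policy_props[OF a] by blast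
  have D0pos: "D0 > 0" unfolding D0_def d_eff_def using d hp
    by (intro sum_pos) auto
  have S1: "S1 = D0 / \<theta>" unfolding S1_def D0_def d_eff_def
    by (simp add: sum_divide_distrib mult.commute)
  have x0pos: "x0 > 0" unfolding x0_def using th lam D0pos by (simp add: add_nonneg_pos)
  have "expected_V p \<alpha> lam T a \<le> (\<Sum>t=1..T. f (a t) (card {l\<in>{1..t-1}. a l = a t}))"
    unfolding EV_sum f_def
    by (intro sum_mono term_upper) (use al lam th hpa in auto)
  also have "\<dots> = (\<Sum>b\<in>{1..d}. \<Sum>k < n b. f b k)"
    unfolding n_def by (rule regroup) (use a policy_props in auto)
  also have "\<dots> \<le> (\<Sum>b\<in>{1..d}. (lam powr -\<alpha> - psi \<alpha> lam / (\<theta> * p b) + lam powr -\<alpha> / (1 - rr \<theta> (p b)))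
        + psi \<alpha> (\<theta> * p b * real (n b) + lam) / (\<theta> * p b))"
  proof (rule sum_mono)
    fix b assume b: "b \<in> {1..d}"
    have pb: "0 < p b" "p b \<le> 1" using hp[OF b] by auto
    have qb: "0 < \<theta> * p b" using pb th by simp
    have "(\<Sum>k < n b. f b k) = (\<Sum>k < n b. (\<theta> * p b * real k + lam) powr -\<alpha>) + lam powr -\<alpha> * (\<Sum>k < n b. rr \<theta> (p b) ^ k)"
      by (simp add: f_def sum.distrib sum_distrib_left)
    also have "\<dots> \<le> (lam powr -\<alpha> + (psi \<alpha> (\<theta> * p b * real (n b) + lam) - psi \<alpha> lam) / (\<theta> * p b))
        + lam powr -\<alpha> * (1 / (1 - rr \<theta> (p b)))"
      by (intro add_mono sum_upper mult_left_mono geom_bound less_imp_le[OF rr_pos] rr_less_1)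
         (use al qb lam th pb in auto)
    finally show "(\<Sum>k < n b. f b k) \<le> (lam powr -\<alpha> - psi \<alpha> lam / (\<theta> * p b) + lam powr -\<alpha> / (1 - rr \<theta> (p b)))
        + psi \<alpha> (\<theta> * p b * real (n b) + lam) / (\<theta> * p b)"
      by (simp add: diff_divide_distrib)
  qed
  also have "\<dots> = Kup d p \<alpha> lam \<theta> + (\<Sum>b\<in>{1..d}. psi \<alpha> (\<theta> * p b * real (n b) + lam) / (\<theta> * p b))"
    by (simp add: Kup_def sum.distrib)
  also have "(\<Sum>b\<in>{1..d}. psi \<alpha> (\<theta> * p b * real (n b) + lam) / (\<theta> * p b))
      \<le> (\<Sum>b\<in>{1..d}. psi \<alpha> x0 * (1 / (\<theta> * p b)) + x0 powr -\<alpha> * (real (n b) + lam * (1 / (\<theta> * p b)) - x0 * (1 / (\<theta> * p b))))"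
  proof (rule sum_mono)
    fix b assume b: "b \<in> {1..d}"
    have pb: "0 < p b" "p b \<le> 1" using hp[OF b] by auto
    have qb: "0 < \<theta> * p b" using pb th by simp
    have yp: "0 < \<theta> * p b * real (n b) + lam" using qb lam by (simp add: add_nonneg_pos)
    have "psi \<alpha> (\<theta> * p b * real (n b) + lam) \<le> psi \<alpha> x0 + x0 powr -\<alpha> * (\<theta> * p b * real (n b) + lam - x0)"
      using psi_tangent[OF al x0pos yp] by simp
    hence "psi \<alpha> (\<theta> * p b * real (n b) + lam) / (\<theta> * p b)
       \<le> (psi \<alpha> x0 + x0 powr -\<alpha> * (\<theta> * p b * real (n b) + lam - x0)) / (\<theta> * p b)"
      using qb by (simp add: divide_right_mono)
    also have "\<dots> = psi \<alpha> x0 * (1 / (\<theta> * p b)) + x0 powr -\<alpha> * (real (n b) + lam * (1 / (\<theta> * p b)) - x0 * (1 / (\<theta> * p b)))"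
      using qb pb th by (intro alg_help) simp
    finally show "psi \<alpha> (\<theta> * p b * real (n b) + lam) / (\<theta> * p b)
       \<le> psi \<alpha> x0 * (1 / (\<theta> * p b)) + x0 powr -\<alpha> * (real (n b) + lam * (1 / (\<theta> * p b)) - x0 * (1 / (\<theta> * p b)))" .
  qed
  also have "\<dots> = psi \<alpha> x0 * S1 + x0 powr -\<alpha> * ((\<Sum>b\<in>{1..d}. real (n b)) + lam * S1 - x0 * S1)"
    by (simp add: S1_def sum.distrib sum_distrib_left sum_subtractf algebra_simps)
  also have "(\<Sum>b\<in>{1..d}. real (n b)) = real T" unfolding n_def by (rule sum_counts[OF a])
  also have "x0 * S1 = real T + lam * S1" unfolding x0_def S1 using th D0pos by (simp add: field_simps)
  also have "psi \<alpha> x0 * S1 + x0 powr -\<alpha> * (real T + lam * S1 - (real T + lam * S1)) = S1 * psi \<alpha> x0" by simp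
  also have "S1 * psi \<alpha> x0 \<le> S1 * psi \<alpha> (real T / D0 + lam)"
  proof (rule mult_left_mono)
    show "psi \<alpha> x0 \<le> psi \<alpha> (real T / D0 + lam)"
    proof (rule psi_mono[OF al x0pos])
      have "\<theta> * real T / D0 \<le> real T / D0" using th D0pos by (simp add: divide_right_mono mult_left_le_one_le)
      thus "x0 \<le> real T / D0 + lam" unfolding x0_def by simp
    qed
    show "0 \<le> S1" unfolding S1 using th D0pos by simp
  qed
  finally show ?thesis unfolding S1 D0_def by (simp add: algebra_simps)
qed


lemma floor_lower:
  fixes x :: real assumes "0 \<le> x" shows "x - 1 \<le> real (nat \<lfloor>x\<rfloor>)"
  using assms by linarith

lemma lower_exists:
  assumes d: "d \<ge> 1" and hp: "\<And>b. b \<in> {1..d} \<Longrightarrow> 0 < p b \<and> p b \<le> 1"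
    and lam: "lam > 0" and al: "0 < \<alpha>" "\<alpha> \<le> 1"
    and T: "real T \<ge> d_eff d p"
  shows "\<exists>a\<in>offline_policies d T. d_eff d p * psi \<alpha> (real T / d_eff d p + lam)
           - d_eff d p * (lam powr -\<alpha> + psi \<alpha> lam) \<le> expected_V p \<alpha> lam T a"
proof -
  define D0 where "D0 = d_eff d p"
  have D0pos: "D0 > 0" unfolding D0_def d_eff_def using d hp
    by (intro sum_pos) auto
  define N where "N b = nat \<lfloor>real T / (D0 * p b)\<rfloor>" for b
  have NleR: "real (N b) \<le> real T / (D0 * p b)" if "b \<in> {1..d}" for b
    using hp[OF that] D0pos unfolding N_def by (simp add: of_nat_floor)
  have "real (\<Sum>b\<in>{1..d}. N b) \<le> (\<Sum>b\<in>{1..d}. real T / (D0 * p b))"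
    unfolding of_nat_sum by (intro sum_mono NleR)
  also have "\<dots> = real T / D0 * D0"
    unfolding D0_def[symmetric, THEN sym] by (simp add: D0_def d_eff_def sum_distrib_left)
  also have "\<dots> = real T" using D0pos by simp
  finally have "(\<Sum>b\<in>{1..d}. N b) \<le> T" by linarith
  from exists_policy[OF d this] obtain a where a: "a \<in> offline_policies d T"
    "\<forall>b\<in>{1..d}. N b \<le> card {l\<in>{1..T}. a l = b}" by blast
  define n where "n b = card {l\<in>{1..T}. a l = b}" for b
  define f where "f b k = (p b * real k + lam) powr -\<alpha>" for b k
  define x1 where "x1 = real T / D0 - 1 + lam"
  have x1lam: "x1 \<ge> lam" unfolding x1_def using T D0pos by (simp add: D0_def field_simps)
  have x1pos: "x1 > 0" using x1lam lam by simp
  have hpa: "\<And>l. l \<in> {1..T} \<Longrightarrow> 0 < p (a l) \<and> p (a l) \<le> 1" using hp policy_props[OF a(1)] by blast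
  have "(\<Sum>t=1..T. f (a t) (card {l\<in>{1..t-1}. a l = a t})) \<le> expected_V p \<alpha> lam T a"
    unfolding EV_sum f_def
    by (intro sum_mono) (subst mult.commute, rule term_lower, use al lam hpa in auto)
  moreover have "(\<Sum>t=1..T. f (a t) (card {l\<in>{1..t-1}. a l = a t})) = (\<Sum>b\<in>{1..d}. \<Sum>k < n b. f b k)"
    unfolding n_def by (rule regroup) (use a policy_props in auto)
  moreover have "(\<Sum>b\<in>{1..d}. \<Sum>k < n b. f b k) \<ge> (\<Sum>b\<in>{1..d}. (psi \<alpha> x1 - psi \<alpha> lam) * (1 / p b))"
  proof (rule sum_mono)
    fix b assume b: "b \<in> {1..d}"
    have pb: "0 < p b" "p b \<le> 1" using hp[OF b] by auto
    have "(\<Sum>k < n b. f b k) \<ge> (\<Sum>k < N b. f b k)"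
      by (rule sum_mono2) (use a(2) b in \<open>auto simp: n_def f_def\<close>)
    moreover have "(\<Sum>k < N b. f b k) \<ge> (psi \<alpha> (p b * real (N b) + lam) - psi \<alpha> lam) / p b"
      unfolding f_def by (rule sum_lower) (use al pb lam in auto)
    moreover have pm: "psi \<alpha> x1 \<le> psi \<alpha> (p b * real (N b) + lam)"
    proof (rule psi_mono[OF al x1pos])
      have "real T / (D0 * p b) - 1 \<le> real (N b)" unfolding N_def
        by (rule floor_lower) (use pb D0pos in simp)
      hence "p b * (real T / (D0 * p b) - 1) \<le> p b * real (N b)" using pb by (simp add: mult_left_mono)
      moreover have "p b * (real T / (D0 * p b) - 1) = real T / D0 - p b" using pb D0pos by (simp add: field_simps)
      ultimately show "x1 \<le> p b * real (N b) + lam" unfolding x1_def using pb by linarith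
    qed
    moreover have "(psi \<alpha> x1 - psi \<alpha> lam) / p b \<le> (psi \<alpha> (p b * real (N b) + lam) - psi \<alpha> lam) / p b"
      by (rule divide_right_mono) (use pm pb in auto)
    moreover have "(psi \<alpha> x1 - psi \<alpha> lam) * (1 / p b) = (psi \<alpha> x1 - psi \<alpha> lam) / p b" by simp
    ultimately show "(psi \<alpha> x1 - psi \<alpha> lam) * (1 / p b) \<le> (\<Sum>k < n b. f b k)"
      by linarith
  qed
  moreover have "(\<Sum>b\<in>{1..d}. (psi \<alpha> x1 - psi \<alpha> lam) * (1 / p b)) = D0 * (psi \<alpha> x1 - psi \<alpha> lam)"
    by (simp add: D0_def d_eff_def sum_distrib_left mult.commute)
  moreover have "psi \<alpha> (real T / D0 + lam) - psi \<alpha> x1 \<le> lam powr -\<alpha>"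
  proof -
    have "psi \<alpha> (x1 + 1) - psi \<alpha> x1 \<le> x1 powr -\<alpha> * (x1 + 1 - x1)"
      by (rule psi_tangent) (use al x1pos in auto)
    also have "\<dots> \<le> lam powr -\<alpha>" using x1lam lam al by (simp add: powr_mono2')
    finally show ?thesis unfolding x1_def by simp
  qed
  moreover have "D0 * (psi \<alpha> (real T / D0 + lam) - lam powr -\<alpha> - psi \<alpha> lam) \<le> D0 * (psi \<alpha> x1 - psi \<alpha> lam)"
    by (rule mult_left_mono) (use calculation D0pos in auto)
  ultimately have "D0 * psi \<alpha> (real T / D0 + lam) - D0 * (lam powr -\<alpha> + psi \<alpha> lam) \<le> expected_V p \<alpha> lam T a"
    by (simp add: algebra_simps)
  thus ?thesis using a(1) unfolding D0_def by blast
qed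



theorem lemma3:
  fixes d :: nat and p :: "nat \<Rightarrow> real" and \<alpha> lam :: real
  assumes "d \<ge> 1"
    and "\<And>a. a \<in> {1..d} \<Longrightarrow> 0 < p a \<and> p a \<le> 1"
    and "lam > 0"
    and "0 < \<alpha>" and "\<alpha> \<le> 1"
  shows "(\<lambda>T. max_offline d p \<alpha> lam T) \<sim>[at_top]
         (\<lambda>T. d_eff d p * psi \<alpha> (real T / d_eff d p + lam))"
proof -
  note d = assms(1) and hp = assms(2) and lam = assms(3) and al = assms(4,5)
  define D0 where "D0 = d_eff d p"
  define g where "g T = D0 * psi \<alpha> (real T / D0 + lam)" for T :: nat
  define f where "f T = max_offline d p \<alpha> lam T" for T
  define C where "C = D0 * (lam powr -\<alpha> + psi \<alpha> lam)"
  have D0pos: "D0 > 0" unfolding D0_def d_eff_def using d hp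
    by (intro sum_pos) auto
  have fin: "finite (offline_policies d T)" for T
    unfolding offline_policies_def by (intro finite_PiE) auto
  have ne: "offline_policies d T \<noteq> {}" for T
    unfolding offline_policies_def using d by (simp add: PiE_eq_empty_iff)
  have up: "f T \<le> g T / \<theta> + Kup d p \<alpha> lam \<theta>" if "0 < \<theta>" "\<theta> < 1" for T \<theta>
  proof -
    have "\<forall>a\<in>offline_policies d T. expected_V p \<alpha> lam T a \<le> g T / \<theta> + Kup d p \<alpha> lam \<theta>"
      using upper_all[OF d hp lam al that] unfolding g_def D0_def by (simp add: algebra_simps)
    thus ?thesis unfolding f_def max_offline_def using fin[of T] ne[of T] by simp
  qed
  have lo: "g T - C \<le> f T" if TD: "real T \<ge> D0" for T
  proof -
    obtain a where a: "a \<in> offline_policies d T"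
      "g T - C \<le> expected_V p \<alpha> lam T a"
      using lower_exists[OF d hp lam al TD[unfolded D0_def]] unfolding g_def C_def D0_def by blast
    have "expected_V p \<alpha> lam T a \<le> f T"
      unfolding f_def max_offline_def using fin[of T] a(1) by simp
    thus ?thesis using a(2) by linarith
  qed
  have lim1: "filterlim (\<lambda>T::nat. real T * (1 / D0)) at_top sequentially"
    by (rule filterlim_at_top_mult_tendsto_pos[OF tendsto_const _ filterlim_real_sequentially]) (use D0pos in simp)
  have lim2: "filterlim (\<lambda>T::nat. lam + real T * (1 / D0)) at_top sequentially"
    by (rule filterlim_tendsto_add_at_top[OF tendsto_const lim1])
  have lim3: "filterlim (\<lambda>T::nat. psi \<alpha> (lam + real T * (1 / D0))) at_top sequentially"
    by (rule filterlim_compose[OF psi_at_top[OF al] lim2])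
  have glim: "filterlim g at_top sequentially"
  proof -
    have "filterlim (\<lambda>T::nat. D0 * psi \<alpha> (lam + real T * (1 / D0))) at_top sequentially"
      by (rule filterlim_tendsto_pos_mult_at_top[OF tendsto_const D0pos lim3])
    thus ?thesis unfolding g_def by (simp add: algebra_simps)
  qed
  have gbig: "eventually (\<lambda>T. Z < g T) sequentially" for Z
    using glim unfolding filterlim_at_top_dense by blast
  have Tbig: "eventually (\<lambda>T. real T \<ge> D0) sequentially"
    using eventually_ge_at_top[of "nat \<lceil>D0\<rceil>"] by eventually_elim linarith
  have "((\<lambda>T. f T / g T) \<longlongrightarrow> 1) sequentially"
  proof (rule order_tendstoI)
    fix l :: real assume l: "l < 1"
    define \<eta> where "\<eta> = 1 - l"
    have eta: "\<eta> > 0" using l by (simp add: \<eta>_def)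
    show "eventually (\<lambda>T. l < f T / g T) sequentially"
      using gbig[of "max 0 (C / \<eta>)"] Tbig
    proof eventually_elim
      case (elim T)
      have gp: "g T > 0" using elim by simp
      have "C / \<eta> < g T" using elim by simp
      hence "C < \<eta> * g T" using eta by (simp add: divide_less_eq mult.commute)
      moreover have "l * g T = g T - \<eta> * g T" by (simp add: \<eta>_def algebra_simps)
      ultimately have "l * g T < f T" using lo[OF elim(2)] by linarith
      thus ?case using gp by (simp add: less_divide_eq)
    qed
  next
    fix u :: real assume u: "u > 1"
    define \<theta> where "\<theta> = 2 / (1 + u)"
    have th: "0 < \<theta>" "\<theta> < 1" using u by (auto simp: \<theta>_def)
    have thinv: "1 / \<theta> = (1 + u) / 2" by (simp add: \<theta>_def)
    define K where "K = Kup d p \<alpha> lam \<theta>"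
    show "eventually (\<lambda>T. f T / g T < u) sequentially"
      using gbig[of "max 0 (2 * K / (u - 1))"]
    proof eventually_elim
      case (elim T)
      have gp: "g T > 0" using elim by simp
      have "2 * K / (u - 1) < g T" using elim by simp
      hence a1: "2 * K < g T * (u - 1)" using u by (simp add: divide_less_eq)
      have a2: "g T / \<theta> = (g T + u * g T) / 2" unfolding \<theta>_def using u by (simp add: field_simps)
      have a3: "f T \<le> g T / \<theta> + K" using up[OF th, of T] unfolding K_def .
      have a4: "g T * (u - 1) = u * g T - g T" by (simp add: algebra_simps)
      have h1: "f T \<le> (g T + u * g T) / 2 + K" using a2 a3 by linarith
      have h2: "2 * K < u * g T - g T" using a1 a4 by linarith
      have lin: "\<And>F G X K :: real. F \<le> (G + X) / 2 + K \<Longrightarrow> 2 * K < X - G \<Longrightarrow> F < X" by argo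
      have "f T < u * g T" by (rule lin[OF h1 h2])
      thus ?case using gp by (simp add: divide_less_eq)
    qed
  qed
  hence "f \<sim>[sequentially] g" by (rule asymp_equivI')
  thus ?thesis unfolding f_def g_def D0_def by simp
qed


end
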